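(* Let $v\ge w\ge 3$ and let $(\mathcal{X},\mathcal{B})$ be a $2$-IPPS$(w,v)$. If there exist two distinct blocks $A,B\in\mathcal{B}$ with $|A\cap B|=w-1$, then $|\mathcal{B}|\le v-w+1$.
   Context: A $(w,v)$ set system is a pair $(\mathcal{X},\mathcal{B})$ with $|\mathcal{X}|=v$ and $\mathcal{B}$ a family of $w$-element subsets (blocks) of $\mathcal{X}$. For a $w$-subset $T\subseteq\mathcal{X}$ let $P_t(T)=\{\mathcal{P}\subseteq\mathcal{B}: |\mathcal{P}|\le t,\ T\subseteq\bigcup_{B\in\mathcal{P}}B\}$. The set system is a $t$-IPPS$(w,v)$ if for every $w$-subset $T\subseteq\mathcal{X}$, either $P_t(T)=\emptyset$ or $\bigcap_{\mathcal{P}\in P_t(T)}\mathcal{P}\neq\emptyset$. *)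

theory Defs
  imports Main
begin

definition set_system :: "nat \<Rightarrow> nat \<Rightarrow> 'a set \<Rightarrow> 'a set set \<Rightarrow> bool" where
  "set_system w v X B \<longleftrightarrow> finite X \<and> card X = v \<and>
     (\<forall>b\<in>B. b \<subseteq> X \<and> card b = w)"

definition Pt :: "nat \<Rightarrow> 'a set set \<Rightarrow> 'a set \<Rightarrow> 'a set set set" where
  "Pt t B T = {P. P \<subseteq> B \<and> card P \<le> t \<and> T \<subseteq> \<Union>P}"

definition IPPS :: "nat \<Rightarrow> nat \<Rightarrow> nat \<Rightarrow> 'a set \<Rightarrow> 'a set set \<Rightarrow> bool" where
  "IPPS t w v X B \<longleftrightarrow> set_system w v X B \<and>
     (\<forall>T. T \<subseteq> X \<and> card T = w \<longrightarrow> Pt t B T = {} \<or> \<Inter>(Pt t B T) \<noteq> {})"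

end

theory Submission
  imports Defs
begin

theorem proposition2:
  fixes X :: "'a set" and B :: "'a set set" and v w :: nat
  assumes "v \<ge> w" and "w \<ge> 3"
    and "IPPS 2 w v X B"
    and "A1 \<in> B" and "A2 \<in> B" and "A1 \<noteq> A2" and "card (A1 \<inter> A2) = w - 1"
  shows "card B \<le> v - w + 1"
proof -
  note a = assms
  have fX: "finite X" and cX: "card X = v" and bl: "\<And>b. b \<in> B \<Longrightarrow> b \<subseteq> X \<and> card b = w"
    using a(3) unfolding IPPS_def set_system_def by auto
  have H: "\<And>T. T \<subseteq> X \<Longrightarrow> card T = w \<Longrightarrow> Pt 2 B T = {} \<or> \<Inter>(Pt 2 B T) \<noteq> {}"
    using a(3) unfolding IPPS_def by auto
  have key: False if "T \<subseteq> X" "card T = w" "P1 \<in> Pt 2 B T" "P2 \<in> Pt 2 B T" "P1 \<inter> P2 = {}" for T P1 P2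
  proof -
    have "\<Inter>(Pt 2 B T) \<subseteq> P1 \<inter> P2" using that(3,4) by blast
    then show False using H[OF that(1,2)] that by auto
  qed
  have fB: "finite B" using fX bl by (meson finite_Pow_iff finite_subset PowI subsetI)
  define U where "U = A1 \<union> A2"
  have fA1: "finite A1" "finite A2" using bl a(4,5) fX finite_subset by blast+
  have cU: "card U = w + 1"
    using card_Un_Int[OF fA1] bl[OF a(4)] bl[OF a(5)] a(2,7) unfolding U_def by auto
  have UX: "U \<subseteq> X" using bl a(4,5) unfolding U_def by auto
  have c1: "\<not> D \<subseteq> U" if D: "D \<in> B - {A1,A2}" for D
  proof
    assume DU: "D \<subseteq> U"
    have DX: "D \<subseteq> X" "card D = w" using bl D by auto
    have "{D} \<in> Pt 2 B D" using D unfolding Pt_def by auto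
    moreover have "{A1,A2} \<in> Pt 2 B D" using DU a(4,5) unfolding Pt_def U_def
      by (auto simp: card_insert_if)
    ultimately show False using key[OF DX] D by auto
  qed
  define f where "f D = (SOME y. y \<in> D - U)" for D
  have fD: "f D \<in> D - U" if "D \<in> B - {A1,A2}" for D
    unfolding f_def using c1[OF that] by (metis (no_types, lifting) Diff_eq_empty_iff equals0I someI_ex)
  have inj: "inj_on f (B - {A1,A2})"
  proof (rule inj_onI)
    fix D E assume D: "D \<in> B - {A1,A2}" and E: "E \<in> B - {A1,A2}" and eq: "f D = f E"
    show "D = E"
    proof (rule ccontr)
      assume ne: "D \<noteq> E"
      define y where "y = f D"
      have y: "y \<in> D" "y \<in> E" "y \<notin> U" using fD[OF D] fD[OF E] eq y_def by auto
      define T where "T = (A1 \<inter> A2) \<union> {y}"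
      have fI: "finite (A1 \<inter> A2)" using fA1 by auto
      have "y \<notin> A1 \<inter> A2" using y U_def by auto
      then have cT: "card T = w" using a(2,7) fI unfolding T_def by auto
      have TX: "T \<subseteq> X" using y D bl UX unfolding T_def U_def by blast
      have "{A1,D} \<in> Pt 2 B T" using D a(4) y unfolding Pt_def T_def by (auto simp: card_insert_if)
      moreover have "{A2,E} \<in> Pt 2 B T" using E a(5) y unfolding Pt_def T_def by (auto simp: card_insert_if)
      moreover have "{A1,D} \<inter> {A2,E} = {}" using D E ne a(6) by auto
      ultimately show False using key[OF TX cT] by blast
    qed
  qed
  have "f ` (B - {A1,A2}) \<subseteq> X - U" using fD bl by blast
  then have "card (B - {A1,A2}) \<le> card (X - U)"
    using card_inj_on_le[OF inj] fX by blast
  also have "card (X - U) = v - (w + 1)" using card_Diff_subset[OF _ UX] fX UX cX cU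
    by (metis finite_subset)
  finally have 1: "card (B - {A1,A2}) \<le> v - (w + 1)" .
  have "card (B - {A1,A2}) = card B - 2" using card_Diff_subset[of "{A1,A2}" B] a(4,5,6) fB
    by auto
  moreover have "card U \<le> v" using card_mono[OF fX UX] cX by simp
  ultimately show ?thesis using 1 cU by linarith
qed

end
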